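(* If $\mathbb V\in\mathrm{Rep}(Q,\mathbb{F}_1)$ is indecomposable, then every $\Phi=(\phi_i)_{i\in I}\in\mathrm{End}(\mathbb V)$ is either nilpotent or an isomorphism.
   Context: $\mathrm{Vect}_{\mathbb{F}_1}$: finite pointed sets $(V,0_V)$ with pointed maps injective on the complement of the preimage of the base point. $\mathrm{Rep}(Q,\mathbb{F}_1)$: representations $\mathbb V=(V_i,f_h)$ of a quiver $Q$ (vertices $I$, edges $E$) with $V_i\in\mathrm{Vect}_{\mathbb{F}_1}$ and $f_h:V_{h'}\to V_{h''}$ morphisms, morphisms being families of morphisms commuting with edge maps. Direct sums are taken vertexwise, where $V\oplus W$ is $V\sqcup W$ with base points identified. $\mathbb V$ is indecomposable if it is nonzero and cannot be written as $\mathbb U\oplus\mathbb W$ with $\mathbb U,\mathbb W\ne0$. An endomorphism $T$ of $V\in\mathrm{Vect}_{\mathbb{F}_1}$ is nilpotent if $T^n$ maps everything to $0_V$ for some $n$; $\Phi=(\phi_i)$ is nilpotent if every $\phi_i$ is nilpotent. *)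

theory Defs
  imports Main
begin

definition quiver :: "'i set \<Rightarrow> 'e set \<Rightarrow> ('e \<Rightarrow> 'i) \<Rightarrow> ('e \<Rightarrow> 'i) \<Rightarrow> bool" where
  "quiver I E s t \<longleftrightarrow> finite I \<and> finite E \<and> (\<forall>h\<in>E. s h \<in> I \<and> t h \<in> I)"

definition vect_f1 :: "'a set \<Rightarrow> 'a \<Rightarrow> bool" where
  "vect_f1 V z \<longleftrightarrow> finite V \<and> z \<in> V"

definition f1_mor :: "'a set \<Rightarrow> 'a \<Rightarrow> 'a set \<Rightarrow> 'a \<Rightarrow> ('a \<Rightarrow> 'a) \<Rightarrow> bool" where
  "f1_mor V z W w f \<longleftrightarrow> f ` V \<subseteq> W \<and> f z = w \<and> inj_on f {x \<in> V. f x \<noteq> w}"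

definition f1_rep :: "'i set \<Rightarrow> 'e set \<Rightarrow> ('e \<Rightarrow> 'i) \<Rightarrow> ('e \<Rightarrow> 'i) \<Rightarrow>
    ('i \<Rightarrow> 'a set) \<Rightarrow> ('i \<Rightarrow> 'a) \<Rightarrow> ('e \<Rightarrow> 'a \<Rightarrow> 'a) \<Rightarrow> bool" where
  "f1_rep I E s t V z f \<longleftrightarrow> (\<forall>i\<in>I. vect_f1 (V i) (z i)) \<and>
     (\<forall>h\<in>E. f1_mor (V (s h)) (z (s h)) (V (t h)) (z (t h)) (f h))"

definition f1_rep_end :: "'i set \<Rightarrow> 'e set \<Rightarrow> ('e \<Rightarrow> 'i) \<Rightarrow> ('e \<Rightarrow> 'i) \<Rightarrow>
    ('i \<Rightarrow> 'a set) \<Rightarrow> ('i \<Rightarrow> 'a) \<Rightarrow> ('e \<Rightarrow> 'a \<Rightarrow> 'a) \<Rightarrow> ('i \<Rightarrow> 'a \<Rightarrow> 'a) \<Rightarrow> bool" where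
  "f1_rep_end I E s t V z f \<Phi> \<longleftrightarrow> (\<forall>i\<in>I. f1_mor (V i) (z i) (V i) (z i) (\<Phi> i)) \<and>
     (\<forall>h\<in>E. \<forall>x\<in>V (s h). \<Phi> (t h) (f h x) = f h (\<Phi> (s h) x))"

definition f1_rep_nonzero :: "'i set \<Rightarrow> ('i \<Rightarrow> 'a set) \<Rightarrow> ('i \<Rightarrow> 'a) \<Rightarrow> bool" where
  "f1_rep_nonzero I V z \<longleftrightarrow> (\<exists>i\<in>I. V i \<noteq> {z i})"

definition f1_subrep :: "'i set \<Rightarrow> 'e set \<Rightarrow> ('e \<Rightarrow> 'i) \<Rightarrow> ('e \<Rightarrow> 'i) \<Rightarrow>
    ('i \<Rightarrow> 'a set) \<Rightarrow> ('i \<Rightarrow> 'a) \<Rightarrow> ('e \<Rightarrow> 'a \<Rightarrow> 'a) \<Rightarrow> ('i \<Rightarrow> 'a set) \<Rightarrow> bool" where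
  "f1_subrep I E s t V z f U \<longleftrightarrow> (\<forall>i\<in>I. z i \<in> U i \<and> U i \<subseteq> V i) \<and>
     (\<forall>h\<in>E. f h ` U (s h) \<subseteq> U (t h))"

text \<open>Direct sum decomposition V = U \<oplus> W (vertexwise union with only the base point in common),
  U and W both nonzero.\<close>
definition f1_rep_decomposable :: "'i set \<Rightarrow> 'e set \<Rightarrow> ('e \<Rightarrow> 'i) \<Rightarrow> ('e \<Rightarrow> 'i) \<Rightarrow>
    ('i \<Rightarrow> 'a set) \<Rightarrow> ('i \<Rightarrow> 'a) \<Rightarrow> ('e \<Rightarrow> 'a \<Rightarrow> 'a) \<Rightarrow> bool" where
  "f1_rep_decomposable I E s t V z f \<longleftrightarrow> (\<exists>U W.
     f1_subrep I E s t V z f U \<and> f1_subrep I E s t V z f W \<and>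
     (\<forall>i\<in>I. U i \<union> W i = V i \<and> U i \<inter> W i = {z i}) \<and>
     f1_rep_nonzero I U z \<and> f1_rep_nonzero I W z)"

definition f1_rep_indecomposable :: "'i set \<Rightarrow> 'e set \<Rightarrow> ('e \<Rightarrow> 'i) \<Rightarrow> ('e \<Rightarrow> 'i) \<Rightarrow>
    ('i \<Rightarrow> 'a set) \<Rightarrow> ('i \<Rightarrow> 'a) \<Rightarrow> ('e \<Rightarrow> 'a \<Rightarrow> 'a) \<Rightarrow> bool" where
  "f1_rep_indecomposable I E s t V z f \<longleftrightarrow>
     f1_rep_nonzero I V z \<and> \<not> f1_rep_decomposable I E s t V z f"

definition f1_nilpotent :: "'i set \<Rightarrow> ('i \<Rightarrow> 'a set) \<Rightarrow> ('i \<Rightarrow> 'a) \<Rightarrow> ('i \<Rightarrow> 'a \<Rightarrow> 'a) \<Rightarrow> bool" where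
  "f1_nilpotent I V z \<Phi> \<longleftrightarrow> (\<forall>i\<in>I. \<exists>n. \<forall>x\<in>V i. (\<Phi> i ^^ n) x = z i)"

definition f1_rep_iso :: "'i set \<Rightarrow> 'e set \<Rightarrow> ('e \<Rightarrow> 'i) \<Rightarrow> ('e \<Rightarrow> 'i) \<Rightarrow>
    ('i \<Rightarrow> 'a set) \<Rightarrow> ('i \<Rightarrow> 'a) \<Rightarrow> ('e \<Rightarrow> 'a \<Rightarrow> 'a) \<Rightarrow> ('i \<Rightarrow> 'a \<Rightarrow> 'a) \<Rightarrow> bool" where
  "f1_rep_iso I E s t V z f \<Phi> \<longleftrightarrow> f1_rep_end I E s t V z f \<Phi> \<and>
     (\<exists>\<Psi>. f1_rep_end I E s t V z f \<Psi> \<and>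
       (\<forall>i\<in>I. \<forall>x\<in>V i. \<Psi> i (\<Phi> i x) = x \<and> \<Phi> i (\<Psi> i x) = x))"

end

theory Submission
  imports Defs
begin

lemma fp_in: "\<phi> ` V \<subseteq> V \<Longrightarrow> x \<in> V \<Longrightarrow> (\<phi> ^^ k) x \<in> V"
  by (induction k) auto

lemma fp_z: "\<phi> z = z \<Longrightarrow> (\<phi> ^^ k) z = z"
  by (induction k) auto

lemma fp_cancel:
  assumes "\<phi> ` V \<subseteq> V" "\<phi> z = z" "inj_on \<phi> {x\<in>V. \<phi> x \<noteq> z}"
  shows "u \<in> V \<Longrightarrow> v \<in> V \<Longrightarrow> (\<phi> ^^ k) u = (\<phi> ^^ k) v \<Longrightarrow> (\<phi> ^^ k) u \<noteq> z \<Longrightarrow> u = v"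
proof (induction k arbitrary: u v)
  case 0 then show ?case by simp
next
  case (Suc k)
  have e: "(\<phi> ^^ k) (\<phi> u) = (\<phi> ^^ k) (\<phi> v)" "(\<phi> ^^ k) (\<phi> u) \<noteq> z"
    using Suc.prems by (simp_all add: funpow_Suc_right del: funpow.simps)
  have "\<phi> u \<in> V" "\<phi> v \<in> V" using assms Suc.prems by auto
  then have eq: "\<phi> u = \<phi> v" using Suc.IH e by blast
  have "\<phi> u \<noteq> z" using e fp_z[of \<phi> z k] assms(2) by auto
  then show ?case using inj_onD[OF assms(3) eq] Suc.prems(1,2) eq by simp
qed

lemma fp_split: "a \<le> n \<Longrightarrow> (\<phi> ^^ n) x = (\<phi> ^^ (n - a)) ((\<phi> ^^ a) x)"
proof -
  assume "a \<le> n"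
  then have "n = (n - a) + a" by simp
  then have "(\<phi> ^^ n) x = (\<phi> ^^ ((n - a) + a)) x" by simp
  then show ?thesis by (simp only: funpow_add o_apply)
qed

lemma fp_period: "(\<phi> ^^ c) x = x \<Longrightarrow> (\<phi> ^^ (c * m)) x = x"
proof (induction m)
  case 0 then show ?case by simp
next
  case (Suc m)
  have "(\<phi> ^^ (c * Suc m)) x = (\<phi> ^^ (c*m)) ((\<phi> ^^ c) x)"
    using fp_split[of c "c * Suc m" \<phi> x] by simp
  then show ?case using Suc by simp
qed

lemma fp_dich:
  assumes "finite V" "\<phi> ` V \<subseteq> V" "\<phi> z = z" "inj_on \<phi> {x\<in>V. \<phi> x \<noteq> z}"
    and x: "x \<in> V" and N: "card V \<le> N"
  shows "(\<phi> ^^ N) x = z \<or> (\<exists>c>0. (\<phi> ^^ c) x = x)"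
proof -
  let ?g = "\<lambda>k. (\<phi> ^^ k) x"
  have sub: "?g ` {..N} \<subseteq> V" using fp_in[OF assms(2) x] by auto
  have "\<not> inj_on ?g {..N}"
  proof
    assume "inj_on ?g {..N}"
    from card_inj_on_le[OF this sub assms(1)] N show False by simp
  qed
  then obtain a b where ab: "a \<le> N" "b \<le> N" "a \<noteq> b" "?g a = ?g b"
    by (auto simp: inj_on_def)
  then obtain a b where ab: "a < b" "b \<le> N" "?g a = ?g b"
    by (metis linorder_neqE_nat)
  show ?thesis
  proof (cases "?g a = z")
    case True
    have "(\<phi> ^^ N) x = (\<phi> ^^ (N - a)) (?g a)"
      using ab fp_split[of a N \<phi> x] by linarith
    then show ?thesis using True fp_z[of \<phi> z] assms(3) by simp
  next
    case False
    have "?g b = (\<phi> ^^ (b - (b - a))) ((\<phi> ^^ (b - a)) x)"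
      using fp_split[of "b - a" b \<phi> x] by simp
    then have "?g b = (\<phi> ^^ a) ((\<phi> ^^ (b - a)) x)" using ab by simp
    then have "x = (\<phi> ^^ (b - a)) x"
      using fp_cancel[OF assms(2,3,4) x fp_in[OF assms(2) x], of a "b - a"] ab False by simp
    then show ?thesis using ab by (metis zero_less_diff)
  qed
qed

lemma fp_comm:
  assumes "\<forall>x\<in>A. P (g x) = g (Q x)" "Q ` A \<subseteq> A"
  shows "x \<in> A \<Longrightarrow> (P ^^ k) (g x) = g ((Q ^^ k) x)"
proof (induction k arbitrary: x)
  case 0 then show ?case by simp
next
  case (Suc k)
  have "(P ^^ Suc k) (g x) = (P ^^ k) (P (g x))" by (simp add: funpow_Suc_right del: funpow.simps)
  also have "\<dots> = (P ^^ k) (g (Q x))" using assms Suc by simp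
  also have "\<dots> = g ((Q ^^ k) (Q x))" using Suc assms by auto
  finally show ?case by (simp add: funpow_Suc_right del: funpow.simps)
qed

theorem mainTheorem5:
  fixes I :: "'i set" and E :: "'e set" and s t :: "'e \<Rightarrow> 'i"
    and V :: "'i \<Rightarrow> 'a set" and z :: "'i \<Rightarrow> 'a" and f :: "'e \<Rightarrow> 'a \<Rightarrow> 'a"
    and \<Phi> :: "'i \<Rightarrow> 'a \<Rightarrow> 'a"
  assumes "quiver I E s t"
    and "f1_rep I E s t V z f"
    and "f1_rep_indecomposable I E s t V z f"
    and "f1_rep_end I E s t V z f \<Phi>"
  shows "f1_nilpotent I V z \<Phi> \<or> f1_rep_iso I E s t V z f \<Phi>"
proof -
  have fI: "finite I" and st: "\<And>h. h \<in> E \<Longrightarrow> s h \<in> I \<and> t h \<in> I"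
    using assms(1) by (auto simp: quiver_def)
  have fin: "\<And>i. i \<in> I \<Longrightarrow> finite (V i) \<and> z i \<in> V i"
    using assms(2) by (auto simp: f1_rep_def vect_f1_def)
  have fm: "\<And>h. h \<in> E \<Longrightarrow> f h ` V (s h) \<subseteq> V (t h) \<and> f h (z (s h)) = z (t h)"
    using assms(2) by (auto simp: f1_rep_def f1_mor_def)
  have pm: "\<And>i. i \<in> I \<Longrightarrow> \<Phi> i ` V i \<subseteq> V i \<and> \<Phi> i (z i) = z i \<and>
      inj_on (\<Phi> i) {x\<in>V i. \<Phi> i x \<noteq> z i}"
    using assms(4) by (auto simp: f1_rep_end_def f1_mor_def)
  have cm: "\<And>h. h \<in> E \<Longrightarrow> \<forall>x\<in>V (s h). \<Phi> (t h) (f h x) = f h (\<Phi> (s h) x)"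
    using assms(4) by (auto simp: f1_rep_end_def)
  define M where "M = (\<Sum>i\<in>I. card (V i))"
  define N where "N = Suc M"
  have cardN: "\<And>i. i \<in> I \<Longrightarrow> card (V i) \<le> N"
    unfolding N_def M_def using fI by (metis le_SucI member_le_sum zero_le)
  have cmN: "\<And>h x. h \<in> E \<Longrightarrow> x \<in> V (s h) \<Longrightarrow>
      (\<Phi> (t h) ^^ N) (f h x) = f h ((\<Phi> (s h) ^^ N) x)"
  proof -
    fix h x assume h: "h \<in> E" and x: "x \<in> V (s h)"
    show "(\<Phi> (t h) ^^ N) (f h x) = f h ((\<Phi> (s h) ^^ N) x)"
    proof -
      have sh: "s h \<in> I" using st[OF h] by simp
      have "\<Phi> (s h) ` V (s h) \<subseteq> V (s h)" using pm[OF sh] by simp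
      then show ?thesis using fp_comm[of "V (s h)" "\<Phi> (t h)" "f h" "\<Phi> (s h)" x N] cm[OF h] x by simp
    qed
  qed
  define U where "U i = {x\<in>V i. (\<Phi> i ^^ N) x = z i}" for i
  define W where "W i = (\<Phi> i ^^ N) ` V i" for i
  have zU: "z i \<in> U i \<and> U i \<subseteq> V i" if i: "i \<in> I" for i
  proof -
    have "\<Phi> i (z i) = z i" using pm[OF i] by simp
    then have "(\<Phi> i ^^ N) (z i) = z i" by (rule fp_z)
    moreover have "z i \<in> V i" using fin[OF i] by simp
    ultimately show ?thesis unfolding U_def by blast
  qed
  have eU: "f h ` U (s h) \<subseteq> U (t h)" if h: "h \<in> E" for h
  proof
    fix y assume "y \<in> f h ` U (s h)"
    then obtain x where x: "x \<in> V (s h)" "(\<Phi> (s h) ^^ N) x = z (s h)" "y = f h x"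
      by (auto simp: U_def)
    have "f h x \<in> V (t h)" using fm[OF h] x by auto
    moreover have "(\<Phi> (t h) ^^ N) (f h x) = z (t h)" using cmN[OF h x(1)] x fm[OF h] by simp
    ultimately show "y \<in> U (t h)" using x by (simp add: U_def)
  qed
  have subU: "f1_subrep I E s t V z f U"
    unfolding f1_subrep_def using zU eU by blast
  have zW: "z i \<in> W i \<and> W i \<subseteq> V i" if i: "i \<in> I" for i
  proof -
    have "(\<Phi> i ^^ N) (z i) = z i" using pm[OF i] fp_z[of "\<Phi> i" "z i" N] by simp
    then have "z i \<in> W i" using fin[OF i] unfolding W_def by (metis image_eqI)
    moreover have "W i \<subseteq> V i" unfolding W_def using pm[OF i] fp_in[of "\<Phi> i" "V i"] by blast
    ultimately show ?thesis by simp
  qed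
  have eW: "f h ` W (s h) \<subseteq> W (t h)" if h: "h \<in> E" for h
  proof
    fix y assume "y \<in> f h ` W (s h)"
    then obtain x where x: "x \<in> V (s h)" "y = f h ((\<Phi> (s h) ^^ N) x)" by (auto simp: W_def)
    then have "y = (\<Phi> (t h) ^^ N) (f h x)" using cmN[OF h] by simp
    moreover have "f h x \<in> V (t h)" using fm[OF h] x by auto
    ultimately show "y \<in> W (t h)" by (auto simp: W_def)
  qed
  have subW: "f1_subrep I E s t V z f W"
    unfolding f1_subrep_def using zW eW by blast
  have UW: "\<forall>i\<in>I. U i \<union> W i = V i \<and> U i \<inter> W i = {z i}"
  proof
    fix i assume i: "i \<in> I"
    note P = pm[OF i] and F = fin[OF i]
    have P1: "\<Phi> i ` V i \<subseteq> V i" and P2: "\<Phi> i (z i) = z i" using P by simp_all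
    have a: "U i \<subseteq> V i" "W i \<subseteq> V i" using zU[OF i] zW[OF i] by simp_all
    have b: "V i \<subseteq> U i \<union> W i"
    proof
      fix x assume x: "x \<in> V i"
      show "x \<in> U i \<union> W i"
      proof (cases "(\<Phi> i ^^ N) x = z i")
        case True then show ?thesis using x by (auto simp: U_def)
      next
        case False
        then obtain c where c: "c > 0" "(\<Phi> i ^^ c) x = x"
          using fp_dich[of "V i" "\<Phi> i" "z i" x N] P F x cardN[OF i] by blast
        have eqN: "c * N - (c * N - N) = N" using c by (cases c) auto
        have "x = (\<Phi> i ^^ (c * N)) x" using fp_period[OF c(2), of N] by simp
        also have "\<dots> = (\<Phi> i ^^ N) ((\<Phi> i ^^ (c * N - N)) x)"
          using fp_split[of "c * N - N" "c * N" "\<Phi> i" x] eqN by simp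
        finally have "x = (\<Phi> i ^^ N) ((\<Phi> i ^^ (c * N - N)) x)" .
        moreover have "(\<Phi> i ^^ (c * N - N)) x \<in> V i" using fp_in[of "\<Phi> i" "V i" x] P1 x by blast
        ultimately show ?thesis unfolding W_def by blast
      qed
    qed
    have c: "U i \<inter> W i \<subseteq> {z i}"
    proof
      fix y assume y: "y \<in> U i \<inter> W i"
      then obtain x where x: "x \<in> V i" "y = (\<Phi> i ^^ N) x" "(\<Phi> i ^^ N) y = z i"
        by (auto simp: U_def W_def)
      show "y \<in> {z i}"
      proof (cases "(\<Phi> i ^^ N) x = z i")
        case True then show ?thesis using x by simp
      next
        case False
        then obtain c where c: "c > 0" "(\<Phi> i ^^ c) x = x"
          using fp_dich[of "V i" "\<Phi> i" "z i" x N] P F x cardN[OF i] by blast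
        have "(\<Phi> i ^^ (N + N)) x = z i" using x by (simp add: funpow_add)
        then have "(\<Phi> i ^^ (c * (N + N) - (N + N))) ((\<Phi> i ^^ (N + N)) x) = z i"
          using fp_z[of "\<Phi> i" "z i"] P2 by simp
        moreover have "N + N \<le> c * (N + N)" using c by (cases c) auto
        ultimately have "(\<Phi> i ^^ (c * (N + N))) x = z i"
          using fp_split[of "N + N" "c * (N + N)" "\<Phi> i" x] by simp
        then have "x = z i" using fp_period[OF c(2), of "N + N"] by simp
        then show ?thesis using x fp_z[of "\<Phi> i" "z i"] P2 by simp
      qed
    qed
    have "z i \<in> U i" "z i \<in> W i" using zU[OF i] zW[OF i] by simp_all
    then show "U i \<union> W i = V i \<and> U i \<inter> W i = {z i}" using a b c by auto
  qed
  have "\<not> (f1_rep_nonzero I U z \<and> f1_rep_nonzero I W z)"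
    using assms(3) subU subW UW unfolding f1_rep_indecomposable_def f1_rep_decomposable_def
    by blast
  moreover have "f1_nilpotent I V z \<Phi>" if "\<not> f1_rep_nonzero I W z"
  proof -
    have "\<forall>i\<in>I. W i = {z i}" using that by (auto simp: f1_rep_nonzero_def)
    then show ?thesis unfolding f1_nilpotent_def W_def by blast
  qed
  moreover have "f1_rep_iso I E s t V z f \<Phi>" if nz: "\<not> f1_rep_nonzero I U z"
  proof -
    have U0: "\<And>i. i \<in> I \<Longrightarrow> U i = {z i}" using nz by (auto simp: f1_rep_nonzero_def)
    have bij: "bij_betw (\<Phi> i) (V i) (V i)" if i: "i \<in> I" for i
    proof -
      note P = pm[OF i]
      have inj: "inj_on (\<Phi> i) (V i)"
      proof (rule inj_onI)
        fix x y assume xy: "x \<in> V i" "y \<in> V i" "\<Phi> i x = \<Phi> i y"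
        show "x = y"
        proof (cases "\<Phi> i x = z i")
          case True
          have "\<And>w. w \<in> V i \<Longrightarrow> \<Phi> i w = z i \<Longrightarrow> w = z i"
          proof -
            fix w assume w: "w \<in> V i" "\<Phi> i w = z i"
            have "(\<Phi> i ^^ N) w = (\<Phi> i ^^ M) (\<Phi> i w)"
              by (simp add: N_def funpow_Suc_right del: funpow.simps)
            then have "w \<in> U i" using w fp_z[of "\<Phi> i" "z i"] P by (simp add: U_def)
            then show "w = z i" using U0[OF i] by simp
          qed
          then show ?thesis using True xy by metis
        next
          case False then show ?thesis using P xy by (auto simp: inj_on_def)
        qed
      qed
      have "\<Phi> i ` V i = V i"
        using endo_inj_surj[of "V i" "\<Phi> i"] inj P fin[OF i] by blast
      then show ?thesis using inj by (simp add: bij_betw_def)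
    qed
    define \<Psi> where "\<Psi> i = inv_into (V i) (\<Phi> i)" for i
    have inv1: "\<And>i x. i \<in> I \<Longrightarrow> x \<in> V i \<Longrightarrow> \<Psi> i (\<Phi> i x) = x"
      unfolding \<Psi>_def using bij by (meson bij_betw_inv_into_left)
    have inv2: "\<And>i x. i \<in> I \<Longrightarrow> x \<in> V i \<Longrightarrow> \<Phi> i (\<Psi> i x) = x"
      unfolding \<Psi>_def using bij by (meson bij_betw_inv_into_right)
    have bijP: "\<And>i. i \<in> I \<Longrightarrow> bij_betw (\<Psi> i) (V i) (V i)"
      unfolding \<Psi>_def using bij by (meson bij_betw_inv_into)
    have endP: "f1_rep_end I E s t V z f \<Psi>"
      unfolding f1_rep_end_def f1_mor_def
    proof (intro conjI ballI)
      fix i assume i: "i \<in> I"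
      show "\<Psi> i ` V i \<subseteq> V i" using bijP[OF i] by (simp add: bij_betw_def)
      show "\<Psi> i (z i) = z i" using inv1[OF i, of "z i"] pm[OF i] fin[OF i] by simp
      show "inj_on (\<Psi> i) {x \<in> V i. \<Psi> i x \<noteq> z i}"
        using bijP[OF i] by (auto simp: bij_betw_def inj_on_def)
    next
      fix h x assume h: "h \<in> E" and x: "x \<in> V (s h)"
      define y where "y = \<Psi> (s h) x"
      have y: "y \<in> V (s h)" "\<Phi> (s h) y = x"
        using bijP x st[OF h] inv2 unfolding y_def by (auto simp: bij_betw_def)
      have "f h x = \<Phi> (t h) (f h y)" using cm[OF h] y by simp
      moreover have "f h y \<in> V (t h)" using fm[OF h] y by auto
      ultimately show "\<Psi> (t h) (f h x) = f h (\<Psi> (s h) x)"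
        using inv1 st[OF h] y_def by simp
    qed
    show ?thesis unfolding f1_rep_iso_def using assms(4) endP inv1 inv2 by blast
  qed
  ultimately show ?thesis by blast
qed

end
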